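(* Let $d\in\mathbb{N}$ and $K=\mathbb{N}_0^d$ or $K=\mathbb{Z}^d$. Let $(\Omega,\mathcal F,P)$ be a probability space and $(\theta_k)_{k\in K}$ a $d$-parameter semigroup (group if $K=\mathbb{Z}^d$) of $P$-preserving transformations. Let $(M,\mathcal B,\mu)$ be a probability space, $\tau$ an ergodic $\mu$-preserving transformation of $M$, $\kappa:M\to K$ measurable, $\kappa_n=\sum_{i=0}^{n-1}\kappa\circ\tau^i$. Assume that for $\mu$-almost all $t\in M$, $(\theta_k)_{k\in K}$ is weakly mixing along $(\kappa_n(t))_{n\in\mathbb{N}}$. Then for every $F\in L^1(M\times\Omega,\mathcal B\otimes\mathcal F,\bar P)$, $\bar P=\mu\otimes P$, $$\frac1n\sum_{i=0}^{n-1}F\big(\tau^i(t),\theta_{\kappa_i(t)}\omega\big)\to\bar E[F]=\int F\,d\bar P\quad(n\to\infty)$$ $\bar P$-almost surely and in $L^1(\bar P)$.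
   Context: A semigroup of measure-preserving transformations: each $\theta_k$ measurable and $P$-preserving, $\theta_0=\mathrm{Id}$, $\theta_k\circ\theta_l=\theta_{k+l}$ (and $\theta_{-k}=\theta_k^{-1}$ in the group case). $(\theta_k)$ is weakly mixing along a $K$-valued sequence $(k_n)$ if $\frac1n\sum_{i=0}^{n-1}|P(A\cap\theta_{k_i}^{-1}B)-P(A)P(B)|\to0$ for all $A,B\in\mathcal F$. *)

theory Defs
  imports "HOL-Probability.Probability"
begin

definition mpt :: "'a measure \<Rightarrow> ('a \<Rightarrow> 'a) \<Rightarrow> bool" where
  "mpt M T \<longleftrightarrow> T \<in> measurable M M \<and> distr M M T = M"

definition ergodic :: "'a measure \<Rightarrow> ('a \<Rightarrow> 'a) \<Rightarrow> bool" where
  "ergodic M T \<longleftrightarrow> mpt M T \<and>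
     (\<forall>A\<in>sets M. T -` A \<inter> space M = A \<longrightarrow> measure M A = 0 \<or> measure M A = 1)"

definition nonneg_lattice :: "(int ^ 'd) set" where
  "nonneg_lattice = {k. \<forall>i. 0 \<le> k $ i}"

text \<open>A semigroup (group, if \<open>K = UNIV\<close>) of \<open>P\<close>-preserving transformations indexed by \<open>K\<close>.\<close>
definition mp_action :: "'a measure \<Rightarrow> (int ^ 'd) set \<Rightarrow> (int ^ 'd \<Rightarrow> 'a \<Rightarrow> 'a) \<Rightarrow> bool" where
  "mp_action P K \<theta> \<longleftrightarrow>
     (\<forall>k\<in>K. mpt P (\<theta> k)) \<and>
     (\<forall>\<omega>\<in>space P. \<theta> 0 \<omega> = \<omega>) \<and>
     (\<forall>k\<in>K. \<forall>l\<in>K. \<forall>\<omega>\<in>space P. \<theta> k (\<theta> l \<omega>) = \<theta> (k + l) \<omega>)"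

definition weakly_mixing_along :: "'a measure \<Rightarrow> ('k \<Rightarrow> 'a \<Rightarrow> 'a) \<Rightarrow> (nat \<Rightarrow> 'k) \<Rightarrow> bool" where
  "weakly_mixing_along P \<theta> ks \<longleftrightarrow>
     (\<forall>A\<in>sets P. \<forall>B\<in>sets P.
        (\<lambda>n. (1 / real n) * (\<Sum>i<n. \<bar>measure P (A \<inter> (\<theta> (ks i) -` B \<inter> space P))
                                         - measure P A * measure P B\<bar>)) \<longlonglongrightarrow> 0)"

end

theory Submission
  imports Defs
begin

lemma funpow_measurable:
  assumes "T \<in> measurable N N" shows "(T ^^ n) \<in> measurable N N"
  by (induction n) (auto intro: measurable_compose[OF _ assms])

lemma mpt_iter:
  assumes "mpt N T" shows "mpt N (T ^^ n)"
proof (induction n)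
  case 0 then show ?case by (simp add: mpt_def distr_id[unfolded id_def])
next
  case (Suc n)
  have T: "T \<in> measurable N N" and d: "distr N N T = N" using assms by (auto simp: mpt_def)
  have Tn: "(T ^^ n) \<in> measurable N N" "distr N N (T^^n) = N" using Suc by (auto simp: mpt_def)
  have "distr N N (T ^^ Suc n) = distr (distr N N T) N (T^^n)"
    by (simp add: funpow_Suc_right distr_distr[OF Tn(1) T] del: funpow.simps)
  also have "\<dots> = N" using d Tn by simp
  finally show ?case using funpow_measurable[OF T, of "Suc n"] unfolding mpt_def by blast
qed

lemma mpt_integral:
  fixes f :: "_ \<Rightarrow> real"
  assumes "mpt N T" "f \<in> borel_measurable N"
  shows "integral\<^sup>L N (\<lambda>x. f (T x)) = integral\<^sup>L N f"
  using integral_distr[of T N N f] assms by (simp add: mpt_def)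

lemma mpt_integrable:
  fixes f :: "_ \<Rightarrow> real"
  assumes "mpt N T" "integrable N f"
  shows "integrable N (\<lambda>x. f (T x))"
  using integrable_distr_eq[of T N N f] assms by (simp add: mpt_def)

lemma mpt_emeasure:
  assumes "mpt N T" "A \<in> sets N"
  shows "emeasure N (T -` A \<inter> space N) = emeasure N A"
  using emeasure_distr[of T N N A] assms by (simp add: mpt_def)

lemma mpt_measure:
  assumes "mpt N T" "A \<in> sets N"
  shows "measure N (T -` A \<inter> space N) = measure N A"
  using mpt_emeasure[OF assms] by (simp add: measure_def)

definition bsum :: "('b \<Rightarrow> 'b) \<Rightarrow> ('b \<Rightarrow> real) \<Rightarrow> nat \<Rightarrow> 'b \<Rightarrow> real" where
  "bsum T g n x = (\<Sum>i<n. g ((T ^^ i) x))"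

lemma bsum_0[simp]: "bsum T g 0 x = 0" by (simp add: bsum_def)

lemma bsum_Suc_shift: "bsum T g (Suc n) x = g x + bsum T g n (T x)"
  unfolding bsum_def by (simp add: sum.lessThan_Suc_shift funpow_Suc_right del: sum.lessThan_Suc funpow.simps)

lemma bsum_measurable[measurable]:
  assumes "T \<in> measurable N N" "g \<in> borel_measurable N"
  shows "bsum T g n \<in> borel_measurable N"
  unfolding bsum_def using assms funpow_measurable[OF assms(1)]
  by (intro borel_measurable_sum) (auto intro: measurable_comp)

lemma bsum_integrable:
  assumes "mpt N T" "integrable N g"
  shows "integrable N (bsum T g n)"
  unfolding bsum_def using assms mpt_iter[OF assms(1)]
  by (intro Bochner_Integration.integrable_sum) (auto intro: mpt_integrable)

fun maxS :: "('b \<Rightarrow> 'b) \<Rightarrow> ('b \<Rightarrow> real) \<Rightarrow> nat \<Rightarrow> 'b \<Rightarrow> real" where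
  "maxS T g 0 x = 0"
| "maxS T g (Suc n) x = max (maxS T g n x) (bsum T g (Suc n) x)"

lemma maxS_nonneg: "0 \<le> maxS T g n x"
  by (induction n) auto

lemma maxS_ge: "k \<le> n \<Longrightarrow> bsum T g k x \<le> maxS T g n x"
proof (induction n)
  case 0 then show ?case by simp
next
  case (Suc n) then show ?case by (cases "k = Suc n") (auto simp: le_Suc_eq intro: max.coboundedI1)
qed

lemma maxS_attained: "0 < maxS T g n x \<Longrightarrow> \<exists>k. 1 \<le> k \<and> k \<le> n \<and> maxS T g n x = bsum T g k x"
proof (induction n)
  case 0 then show ?case by simp
next
  case (Suc n)
  show ?case
  proof (cases "bsum T g (Suc n) x \<le> maxS T g n x")
    case True
    then have "maxS T g (Suc n) x = maxS T g n x" by simp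
    with Suc show ?thesis by (metis le_SucI)
  next
    case False then show ?thesis by auto
  qed
qed

lemma maxS_key:
  assumes "0 < maxS T g n x"
  shows "maxS T g n x \<le> g x + maxS T g n (T x)"
proof -
  obtain k where k: "1 \<le> k" "k \<le> n" "maxS T g n x = bsum T g k x" using maxS_attained[OF assms] by blast
  then obtain j where j: "k = Suc j" by (cases k) auto
  have "bsum T g j (T x) \<le> maxS T g n (T x)" using k j by (intro maxS_ge) auto
  then show ?thesis using k j by (simp add: bsum_Suc_shift)
qed

lemma maxS_measurable[measurable]:
  assumes "T \<in> measurable N N" "g \<in> borel_measurable N"
  shows "maxS T g n \<in> borel_measurable N"
  by (induction n) (use assms in auto)

lemma maxS_integrable:
  assumes "mpt N T" "integrable N g"
  shows "integrable N (maxS T g n)"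
proof (induction n)
  case 0 then show ?case by simp
next
  case (Suc n)
  have "integrable N (\<lambda>x. max (maxS T g n x) (bsum T g (Suc n) x))"
    using Suc bsum_integrable[OF assms] by (intro integrable_max) auto
  then show ?case by simp
qed

lemma maximal_ergodic:
  assumes mpt: "mpt N T" and g: "integrable N g"
  shows "0 \<le> integral\<^sup>L N (\<lambda>x. g x * indicator {x\<in>space N. 0 < maxS T g n x} x)"
proof -
  have T[measurable]: "T \<in> measurable N N" using mpt by (simp add: mpt_def)
  have gm[measurable]: "g \<in> borel_measurable N" using g by simp
  have E: "{x\<in>space N. 0 < maxS T g n x} \<in> sets N" by measurable
  have iM: "integrable N (maxS T g n)" using maxS_integrable[OF assms] .
  have iMT: "integrable N (\<lambda>x. maxS T g n (T x))" using mpt_integrable[OF mpt iM] .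
  have eq: "integral\<^sup>L N (\<lambda>x. maxS T g n x - maxS T g n (T x)) = 0"
    using mpt_integral[OF mpt, of "maxS T g n"] iM iMT by (simp add: Bochner_Integration.integral_diff)
  have le: "integral\<^sup>L N (\<lambda>x. maxS T g n x - maxS T g n (T x))
      \<le> integral\<^sup>L N (\<lambda>x. g x * indicator {x\<in>space N. 0 < maxS T g n x} x)"
  proof (rule integral_mono)
    show "integrable N (\<lambda>x. maxS T g n x - maxS T g n (T x))" using iM iMT by simp
    show "integrable N (\<lambda>x. g x * indicator {x\<in>space N. 0 < maxS T g n x} x)"
      using E g by (rule integrable_real_mult_indicator)
    fix x assume x: "x \<in> space N"
    show "maxS T g n x - maxS T g n (T x) \<le> g x * indicator {x\<in>space N. 0 < maxS T g n x} x"
    proof (cases "0 < maxS T g n x")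
      case True then show ?thesis using x maxS_key[OF True] by (simp add: indicator_def)
    next
      case False
      then have "maxS T g n x = 0" using maxS_nonneg[of T g n x] by simp
      then show ?thesis using False maxS_nonneg[of T g n "T x"] by (simp add: indicator_def)
    qed
  qed
  show ?thesis using eq le by simp
qed

lemma unbounded_nat_iff:
  fixes s :: "nat \<Rightarrow> real"
  shows "(\<forall>m::nat. \<exists>n. real m < s n) \<longleftrightarrow> (\<forall>C::real. \<exists>n. C < s n)"
proof
  assume H: "\<forall>m::nat. \<exists>n. real m < s n"
  show "\<forall>C::real. \<exists>n. C < s n"
  proof
    fix C :: real
    obtain m :: nat where "C < real m" using reals_Archimedean2 by blast
    with H show "\<exists>n. C < s n" by (meson less_trans)
  qed
qed auto

lemma ergodic_bsum_bounded:
  assumes P: "prob_space N" and erg: "ergodic N T" and g: "integrable N g"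
    and neg: "integral\<^sup>L N g < 0"
  shows "AE x in N. \<exists>C. \<forall>n. bsum T g n x \<le> C"
proof -
  interpret prob_space N by fact
  have mpt: "mpt N T" using erg by (simp add: ergodic_def)
  have T[measurable]: "T \<in> measurable N N" using mpt by (simp add: mpt_def)
  have gm[measurable]: "g \<in> borel_measurable N" using g by simp
  define U where "U = {x\<in>space N. \<forall>m::nat. \<exists>n. real m < bsum T g n x}"
  have U[measurable]: "U \<in> sets N" unfolding U_def by measurable
  have inv: "T -` U \<inter> space N = U"
  proof (intro set_eqI iffI)
    fix x assume "x \<in> T -` U \<inter> space N"
    then have x: "x \<in> space N" and Tx: "\<forall>C::real. \<exists>n. C < bsum T g n (T x)"
      unfolding U_def using unbounded_nat_iff by auto
    have "\<forall>C::real. \<exists>n. C < bsum T g n x"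
    proof
      fix C :: real
      obtain n where "C - g x < bsum T g n (T x)" using Tx by blast
      then have "C < bsum T g (Suc n) x" by (simp add: bsum_Suc_shift)
      then show "\<exists>n. C < bsum T g n x" by blast
    qed
    then show "x \<in> U" using x unfolding U_def using unbounded_nat_iff by auto
  next
    fix x assume "x \<in> U"
    then have x: "x \<in> space N" and H: "\<forall>C::real. \<exists>n. C < bsum T g n x"
      unfolding U_def using unbounded_nat_iff by auto
    have "\<forall>C::real. \<exists>n. C < bsum T g n (T x)"
    proof
      fix C :: real
      obtain n where n: "C + \<bar>g x\<bar> + \<bar>C\<bar> < bsum T g n x" using H by blast
      then have "n \<noteq> 0" by (cases n) auto
      then obtain j where j: "n = Suc j" by (cases n) auto
      from n j have "C + \<bar>g x\<bar> + \<bar>C\<bar> < g x + bsum T g j (T x)" by (simp add: bsum_Suc_shift)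
      then have "C < bsum T g j (T x)" using abs_ge_self[of "g x"] abs_ge_zero[of C] by linarith
      then show "\<exists>n. C < bsum T g n (T x)" by blast
    qed
    moreover have "T x \<in> space N" using x T by (meson measurable_space)
    ultimately show "x \<in> T -` U \<inter> space N" using x unfolding U_def using unbounded_nat_iff by auto
  qed
  have "measure N U = 0 \<or> measure N U = 1" using erg U inv by (simp add: ergodic_def)
  moreover have "measure N U \<noteq> 1"
  proof
    assume "measure N U = 1"
    then have AU: "AE x in N. x \<in> U" using AE_prob_1 by simp
    define E where "E n = {x\<in>space N. 0 < maxS T g n x}" for n
    have E[measurable]: "E n \<in> sets N" for n unfolding E_def by measurable
    have "(\<lambda>n. integral\<^sup>L N (\<lambda>x. g x * indicator (E n) x)) \<longlonglongrightarrow> integral\<^sup>L N g"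
    proof (rule integral_dominated_convergence[where w="\<lambda>x. \<bar>g x\<bar>"])
      show "AE x in N. (\<lambda>n. g x * indicator (E n) x) \<longlonglongrightarrow> g x"
        using AU
      proof eventually_elim
        case (elim x)
        then have x: "x \<in> space N" and "\<exists>n. real 0 < bsum T g n x" unfolding U_def by blast+
        then obtain k where k: "0 < bsum T g k x" by auto
        have "eventually (\<lambda>n. g x * indicator (E n) x = g x) sequentially"
          unfolding eventually_sequentially
        proof (intro exI allI impI)
          fix n assume "k \<le> n"
          then have "0 < maxS T g n x" using k maxS_ge[of k n T g x] by linarith
          then show "g x * indicator (E n) x = g x" using x by (simp add: E_def)
        qed
        then show ?case by (rule tendsto_eventually)
      qed
      show "\<And>n. AE x in N. norm (g x * indicator (E n) x) \<le> \<bar>g x\<bar>"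
        by (auto simp: indicator_def)
    qed (use g in auto)
    moreover have "\<And>n. 0 \<le> integral\<^sup>L N (\<lambda>x. g x * indicator (E n) x)"
      using maximal_ergodic[OF mpt g] unfolding E_def by blast
    ultimately have "0 \<le> integral\<^sup>L N g"
      by (intro LIMSEQ_le_const) auto
    then show False using neg by simp
  qed
  ultimately have "measure N U = 0" by simp
  then have "U \<in> null_sets N" using U by (simp add: null_sets_def emeasure_eq_measure)
  then show ?thesis
  proof (rule AE_I')
    show "{x \<in> space N. \<not> (\<exists>C. \<forall>n. bsum T g n x \<le> C)} \<subseteq> U"
      unfolding U_def by (auto simp: not_le)
  qed
qed

lemma bsum_add: "bsum T (\<lambda>x. f x + g x) n x = bsum T f n x + bsum T g n x"
  by (simp add: bsum_def sum.distrib)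

lemma bsum_diff: "bsum T (\<lambda>x. f x - g x) n x = bsum T f n x - bsum T g n x"
  by (simp add: bsum_def sum_subtractf)

lemma bsum_const: "bsum T (\<lambda>x. c) n x = real n * c"
  by (simp add: bsum_def)

lemma bsum_uminus: "bsum T (\<lambda>x. - f x) n x = - bsum T f n x"
  by (simp add: bsum_def sum_negf)

lemma bsum_integral:
  assumes "mpt N T" "integrable N g"
  shows "integral\<^sup>L N (bsum T g n) = real n * integral\<^sup>L N g"
proof -
  have "integral\<^sup>L N (bsum T g n) = (\<Sum>i<n. integral\<^sup>L N (\<lambda>x. g ((T ^^ i) x)))"
    unfolding bsum_def using assms mpt_iter[OF assms(1)]
    by (intro Bochner_Integration.integral_sum) (auto intro: mpt_integrable)
  also have "\<dots> = (\<Sum>i<n. integral\<^sup>L N g)"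
    using assms mpt_iter[OF assms(1)] by (intro sum.cong refl mpt_integral) auto
  finally show ?thesis by simp
qed

lemma cesaro_bound:
  fixes s :: "nat \<Rightarrow> real"
  assumes H: "\<forall>m::nat. \<exists>C. \<forall>n. \<bar>s n - real n * a\<bar> \<le> real n / real (Suc m) + C"
  shows "(\<lambda>n. s n / real n) \<longlonglongrightarrow> a"
proof (rule LIMSEQ_I)
  fix r :: real assume r: "0 < r"
  obtain m :: nat where m: "inverse (real (Suc m)) < r / 2" using reals_Archimedean r
    by (metis half_gt_zero)
  obtain C where C: "\<forall>n. \<bar>s n - real n * a\<bar> \<le> real n / real (Suc m) + C" using H by blast
  define C' where "C' = max C 0"
  obtain no :: nat where no: "2 * C' / r < real no" using reals_Archimedean2 by blast
  show "\<exists>no. \<forall>n\<ge>no. norm (s n / real n - a) < r"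
  proof (intro exI allI impI)
    fix n assume n: "Suc no \<le> n"
    then have npos: "0 < real n" by simp
    have "2 * C' < r * real no" using no r by (simp add: field_simps)
    also have "\<dots> \<le> r * real n" using n r by simp
    finally have Cn: "C' / real n < r / 2" using npos by (simp add: field_simps)
    have "s n / real n - a = (s n - real n * a) / real n" using npos by (simp add: field_simps)
    then have "norm (s n / real n - a) = \<bar>s n - real n * a\<bar> / real n" using npos by simp
    also have "\<dots> \<le> (real n / real (Suc m) + C') / real n"
      using C[rule_format, of n] npos unfolding C'_def by (intro divide_right_mono) auto
    also have "\<dots> = inverse (real (Suc m)) + C' / real n" using npos by (simp add: field_simps)
    also have "\<dots> < r" using m Cn by linarith
    finally show "norm (s n / real n - a) < r" .
  qed
qed

lemma birkhoff_ae:
  assumes P: "prob_space N" and erg: "ergodic N T" and f: "integrable N f"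
  shows "AE x in N. (\<lambda>n. bsum T f n x / real n) \<longlonglongrightarrow> integral\<^sup>L N f"
proof -
  interpret prob_space N by fact
  define I where "I = integral\<^sup>L N f"
  have up: "AE x in N. \<exists>C. \<forall>n. bsum T f n x \<le> real n * (I + 1 / real (Suc m)) + C" for m
  proof -
    have "AE x in N. \<exists>C. \<forall>n. bsum T (\<lambda>x. f x - (I + 1 / real (Suc m))) n x \<le> C"
      using P erg by (rule ergodic_bsum_bounded) (use f in \<open>auto simp: I_def prob_space\<close>)
    moreover have "bsum T (\<lambda>x. f x - (I + 1 / real (Suc m))) n x = bsum T f n x - real n * (I + 1 / real (Suc m))" for n x
      by (simp add: bsum_def sum_subtractf)
    ultimately have "AE x in N. \<exists>C. \<forall>n. bsum T f n x - real n * (I + 1 / real (Suc m)) \<le> C" by simp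
    then show ?thesis
    proof eventually_elim
      case (elim x)
      then obtain C where C: "\<forall>n. bsum T f n x - real n * (I + 1 / real (Suc m)) \<le> C" by blast
      show ?case
      proof (intro exI allI)
        fix n show "bsum T f n x \<le> real n * (I + 1 / real (Suc m)) + C"
          using C[rule_format, of n] by (metis add.commute diff_le_eq)
      qed
    qed
  qed
  have low: "AE x in N. \<exists>C. \<forall>n. real n * (I - 1 / real (Suc m)) - C \<le> bsum T f n x" for m
  proof -
    have "AE x in N. \<exists>C. \<forall>n. bsum T (\<lambda>x. - f x - (- I + 1 / real (Suc m))) n x \<le> C"
      using P erg by (rule ergodic_bsum_bounded) (use f in \<open>auto simp: I_def prob_space\<close>)
    moreover have "bsum T (\<lambda>x. - f x - (- I + 1 / real (Suc m))) n x = - bsum T f n x - real n * (- I + 1 / real (Suc m))" for n x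
      by (simp add: bsum_def sum_subtractf sum_negf)
    ultimately have "AE x in N. \<exists>C. \<forall>n. - bsum T f n x - real n * (- I + 1 / real (Suc m)) \<le> C" by simp
    then show ?thesis
    proof eventually_elim
      case (elim x)
      then obtain C where C: "\<forall>n. - bsum T f n x - real n * (- I + 1 / real (Suc m)) \<le> C" by blast
      show ?case
      proof (intro exI allI)
        fix n
        show "real n * (I - 1 / real (Suc m)) - C \<le> bsum T f n x"
          using C[rule_format, of n] by (simp add: right_diff_distrib)
      qed
    qed
  qed
  have "AE x in N. \<forall>m. (\<exists>C. \<forall>n. bsum T f n x \<le> real n * (I + 1 / real (Suc m)) + C)
        \<and> (\<exists>C. \<forall>n. real n * (I - 1 / real (Suc m)) - C \<le> bsum T f n x)"
    unfolding AE_all_countable using up low by auto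
  then show ?thesis
  proof eventually_elim
    case (elim x)
    show ?case unfolding I_def[symmetric]
    proof (rule cesaro_bound, rule allI)
      fix m
      obtain C1 where C1: "\<forall>n. bsum T f n x \<le> real n * (I + 1 / real (Suc m)) + C1" using elim by blast
      obtain C2 where C2: "\<forall>n. real n * (I - 1 / real (Suc m)) - C2 \<le> bsum T f n x" using elim by blast
      show "\<exists>C. \<forall>n. \<bar>bsum T f n x - real n * I\<bar> \<le> real n / real (Suc m) + C"
      proof (intro exI allI)
        fix n
        show "\<bar>bsum T f n x - real n * I\<bar> \<le> real n / real (Suc m) + (\<bar>C1\<bar> + \<bar>C2\<bar>)"
        proof -
          have d1: "real n * (I + 1 / real (Suc m)) = real n * I + real n / real (Suc m)"
            by (simp add: distrib_left)
          have d2: "real n * (I - 1 / real (Suc m)) = real n * I - real n / real (Suc m)"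
            by (simp add: right_diff_distrib)
          have u: "bsum T f n x - real n * I \<le> real n / real (Suc m) + (\<bar>C1\<bar> + \<bar>C2\<bar>)"
            using C1[rule_format, of n] d1 abs_ge_self[of C1] abs_ge_zero[of C2] by linarith
          have l: "real n * I - bsum T f n x \<le> real n / real (Suc m) + (\<bar>C1\<bar> + \<bar>C2\<bar>)"
            using C2[rule_format, of n] d2 abs_ge_self[of C2] abs_ge_zero[of C1] by linarith
          show ?thesis using u l by (simp add: abs_le_iff)
        qed
      qed
    qed
  qed
qed

lemma birkhoff_L1_nonneg:
  assumes P: "prob_space N" and erg: "ergodic N T" and h: "integrable N h"
    and nn: "\<And>x. x \<in> space N \<Longrightarrow> 0 \<le> h x"
  shows "(\<lambda>n. \<integral>\<^sup>+x. ennreal (norm (bsum T h n x / real n - integral\<^sup>L N h)) \<partial>N) \<longlonglongrightarrow> 0"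
proof -
  interpret prob_space N by fact
  have mpt: "mpt N T" using erg by (simp add: ergodic_def)
  have T[measurable]: "T \<in> measurable N N" using mpt by (simp add: mpt_def)
  have hm[measurable]: "h \<in> borel_measurable N" using h by simp
  have Ih: "0 \<le> integral\<^sup>L N h" using nn by (simp add: integral_nonneg)
  have bnn: "x \<in> space N \<Longrightarrow> 0 \<le> bsum T h n x" for n x
    unfolding bsum_def using funpow_measurable[OF T] nn by (intro sum_nonneg) (meson measurable_space)
  have iF: "integrable N (\<lambda>x. bsum T h n x / real n)" for n
    using bsum_integrable[OF mpt h] by simp
  show ?thesis
  proof (rule Scheffe_lemma1)
    show "integrable N (\<lambda>x. bsum T h n x / real n)" for n by (rule iF)
    show "integrable N (\<lambda>x. integral\<^sup>L N h)" by simp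
    show "AE x in N. (\<lambda>n. bsum T h n x / real n) \<longlonglongrightarrow> integral\<^sup>L N h"
      using P erg h by (rule birkhoff_ae)
    have "(\<integral>\<^sup>+ x. ennreal (norm (bsum T h n x / real n)) \<partial>N) \<le> (\<integral>\<^sup>+ x. ennreal (norm (integral\<^sup>L N h)) \<partial>N)" for n
    proof -
      have "(\<integral>\<^sup>+ x. ennreal (norm (bsum T h n x / real n)) \<partial>N) = (\<integral>\<^sup>+ x. ennreal (bsum T h n x / real n) \<partial>N)"
        using bnn by (intro nn_integral_cong) simp
      also have "\<dots> = ennreal (integral\<^sup>L N (\<lambda>x. bsum T h n x / real n))"
        using iF bnn by (intro nn_integral_eq_integral) auto
      also have "integral\<^sup>L N (\<lambda>x. bsum T h n x / real n) = real n * integral\<^sup>L N h / real n"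
        using bsum_integral[OF mpt h] by simp
      also have "\<dots> \<le> integral\<^sup>L N h" using Ih by (cases "n = 0") auto
      also have "ennreal (integral\<^sup>L N h) = (\<integral>\<^sup>+ x. ennreal (norm (integral\<^sup>L N h)) \<partial>N)"
        using Ih by (simp add: emeasure_space_1)
      finally show ?thesis by (simp add: ennreal_leI)
    qed
    then show "limsup (\<lambda>n. \<integral>\<^sup>+ x. ennreal (norm (bsum T h n x / real n)) \<partial>N) \<le> (\<integral>\<^sup>+ x. ennreal (norm (integral\<^sup>L N h)) \<partial>N)"
      by (intro Limsup_bounded always_eventually allI)
  qed
qed

lemma birkhoff_L1:
  assumes P: "prob_space N" and erg: "ergodic N T" and f: "integrable N f"
  shows "(\<lambda>n. \<integral>\<^sup>+x. ennreal \<bar>bsum T f n x / real n - integral\<^sup>L N f\<bar> \<partial>N) \<longlonglongrightarrow> 0"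
proof -
  interpret prob_space N by fact
  have mpt: "mpt N T" using erg by (simp add: ergodic_def)
  have T[measurable]: "T \<in> measurable N N" using mpt by (simp add: mpt_def)
  have fm[measurable]: "f \<in> borel_measurable N" using f by simp
  define p where "p x = max (f x) 0" for x
  define q where "q x = max (- f x) 0" for x
  have ip: "integrable N p" unfolding p_def using f by auto
  have iq: "integrable N q" unfolding q_def using f by auto
  have fpq: "f x = p x - q x" for x unfolding p_def q_def by auto
  have If: "integral\<^sup>L N f = integral\<^sup>L N p - integral\<^sup>L N q"
    using ip iq by (subst Bochner_Integration.integral_diff[symmetric]) (auto simp: fpq[symmetric])
  have bs: "bsum T f n x = bsum T p n x - bsum T q n x" for n x
    by (simp add: bsum_def sum_subtractf fpq)
  have Lp: "(\<lambda>n. \<integral>\<^sup>+x. ennreal (norm (bsum T p n x / real n - integral\<^sup>L N p)) \<partial>N) \<longlonglongrightarrow> 0"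
    using P erg ip by (rule birkhoff_L1_nonneg) (simp add: p_def)
  have Lq: "(\<lambda>n. \<integral>\<^sup>+x. ennreal (norm (bsum T q n x / real n - integral\<^sup>L N q)) \<partial>N) \<longlonglongrightarrow> 0"
    using P erg iq by (rule birkhoff_L1_nonneg) (simp add: q_def)
  have le: "(\<integral>\<^sup>+x. ennreal \<bar>bsum T f n x / real n - integral\<^sup>L N f\<bar> \<partial>N)
      \<le> (\<integral>\<^sup>+x. ennreal (norm (bsum T p n x / real n - integral\<^sup>L N p)) \<partial>N)
       + (\<integral>\<^sup>+x. ennreal (norm (bsum T q n x / real n - integral\<^sup>L N q)) \<partial>N)" for n
  proof -
    have "(\<integral>\<^sup>+x. ennreal \<bar>bsum T f n x / real n - integral\<^sup>L N f\<bar> \<partial>N)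
      \<le> (\<integral>\<^sup>+x. ennreal (norm (bsum T p n x / real n - integral\<^sup>L N p)) + ennreal (norm (bsum T q n x / real n - integral\<^sup>L N q)) \<partial>N)"
    proof (rule nn_integral_mono)
      fix x
      have "\<bar>bsum T f n x / real n - integral\<^sup>L N f\<bar>
          = \<bar>(bsum T p n x / real n - integral\<^sup>L N p) - (bsum T q n x / real n - integral\<^sup>L N q)\<bar>"
      proof -
        have "bsum T f n x / real n = bsum T p n x / real n - bsum T q n x / real n"
          unfolding bs by (rule diff_divide_distrib)
        then show ?thesis unfolding If by (simp only:)
      qed
      also have "\<dots> \<le> norm (bsum T p n x / real n - integral\<^sup>L N p) + norm (bsum T q n x / real n - integral\<^sup>L N q)"
        by (simp add: abs_triangle_ineq4)
      finally show "ennreal \<bar>bsum T f n x / real n - integral\<^sup>L N f\<bar>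
        \<le> ennreal (norm (bsum T p n x / real n - integral\<^sup>L N p)) + ennreal (norm (bsum T q n x / real n - integral\<^sup>L N q))"
        by (simp add: ennreal_plus[symmetric] ennreal_leI del: ennreal_plus)
    qed
    also have "\<dots> = (\<integral>\<^sup>+x. ennreal (norm (bsum T p n x / real n - integral\<^sup>L N p)) \<partial>N)
       + (\<integral>\<^sup>+x. ennreal (norm (bsum T q n x / real n - integral\<^sup>L N q)) \<partial>N)"
      using ip iq by (intro nn_integral_add) auto
    finally show ?thesis .
  qed
  have "(\<lambda>n. (\<integral>\<^sup>+x. ennreal (norm (bsum T p n x / real n - integral\<^sup>L N p)) \<partial>N)
       + (\<integral>\<^sup>+x. ennreal (norm (bsum T q n x / real n - integral\<^sup>L N q)) \<partial>N)) \<longlonglongrightarrow> 0 + 0"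
    using Lp Lq by (rule tendsto_add)
  then have H: "(\<lambda>n. (\<integral>\<^sup>+x. ennreal (norm (bsum T p n x / real n - integral\<^sup>L N p)) \<partial>N)
       + (\<integral>\<^sup>+x. ennreal (norm (bsum T q n x / real n - integral\<^sup>L N q)) \<partial>N)) \<longlonglongrightarrow> 0"
    by simp
  show ?thesis
    apply (rule tendsto_sandwich[OF _ _ tendsto_const H])
     apply (rule always_eventually, simp)
    apply (rule always_eventually, rule allI, rule le)
    done
qed

lemma countable_K: "countable (K :: (int ^ 'd) set)"
proof -
  have "countable {V :: int ^ 'd. \<forall>i. V $ i \<in> (\<lambda>_. UNIV) i}"
    by (rule countable_vector) simp
  then have "countable (UNIV :: (int ^ 'd) set)" by simp
  then show ?thesis by (rule countable_subset[rotated]) simp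
qed

locale skew =
  fixes P :: "'a measure" and M :: "'m measure"
    and K :: "(int ^ 'd) set"
    and \<theta> :: "int ^ 'd \<Rightarrow> 'a \<Rightarrow> 'a"
    and \<tau> :: "'m \<Rightarrow> 'm" and \<kappa> :: "'m \<Rightarrow> int ^ 'd"
  assumes K: "K = nonneg_lattice \<or> K = UNIV"
    and P: "prob_space P" and M: "prob_space M"
    and act: "mp_action P K \<theta>"
    and erg: "ergodic M \<tau>"
    and \<kappa>_meas: "\<kappa> \<in> measurable M (count_space K)"
    and wm: "AE t in M. weakly_mixing_along P \<theta> (\<lambda>n. \<Sum>i<n. \<kappa> ((\<tau> ^^ i) t))"
begin

sublocale P: prob_space P by (rule P)
sublocale M: prob_space M by (rule M)
sublocale PM: pair_prob_space M P by unfold_locales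

definition kap :: "nat \<Rightarrow> 'm \<Rightarrow> int ^ 'd" where
  "kap n t = (\<Sum>i<n. \<kappa> ((\<tau> ^^ i) t))"

definition S :: "'m \<times> 'a \<Rightarrow> 'm \<times> 'a" where
  "S x = (\<tau> (fst x), \<theta> (\<kappa> (fst x)) (snd x))"

lemma K_0: "0 \<in> K"
  using K by (auto simp: nonneg_lattice_def)

lemma K_add: "k \<in> K \<Longrightarrow> l \<in> K \<Longrightarrow> k + l \<in> K"
  using K by (auto simp: nonneg_lattice_def)

lemma mpt_\<tau>: "mpt M \<tau>" using erg by (simp add: ergodic_def)

lemma \<tau>_meas[measurable]: "\<tau> \<in> measurable M M" using mpt_\<tau> by (simp add: mpt_def)

lemma \<tau>_iter_meas[measurable]: "(\<tau> ^^ i) \<in> measurable M M"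
  by (rule funpow_measurable[OF \<tau>_meas])

lemma \<tau>_iter_space: "t \<in> space M \<Longrightarrow> (\<tau> ^^ i) t \<in> space M"
  using \<tau>_iter_meas by (meson measurable_space)

lemma \<kappa>_K: "t \<in> space M \<Longrightarrow> \<kappa> t \<in> K"
  using measurable_space[OF \<kappa>_meas] by auto

lemma kap_K: "t \<in> space M \<Longrightarrow> kap i t \<in> K"
  by (induction i) (auto simp: kap_def K_0 intro!: K_add \<kappa>_K \<tau>_iter_space)

lemma kap_Suc: "kap (Suc i) t = kap i t + \<kappa> ((\<tau> ^^ i) t)"
  by (simp add: kap_def)

lemma kap_meas: "kap i \<in> measurable M (count_space K)"
proof (induction i)
  case 0
  have "(\<lambda>t. 0 :: int ^ 'd) \<in> measurable M (count_space K)"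
    using K_0 by (intro measurable_const) auto
  then show ?case by (simp add: kap_def[abs_def])
next
  case (Suc i)
  have "(\<lambda>t. (\<lambda>k t. k + \<kappa> ((\<tau> ^^ i) t)) (kap i t) t) \<in> measurable M (count_space K)"
  proof (rule measurable_compose_countable'[OF _ Suc countable_K])
    fix k assume k: "k \<in> K"
    have h: "(\<lambda>l. k + l) \<in> measurable (count_space K) (count_space K)"
      using k K_add by auto
    show "(\<lambda>t. k + \<kappa> ((\<tau> ^^ i) t)) \<in> measurable M (count_space K)"
      by (rule measurable_compose[OF measurable_compose[OF \<tau>_iter_meas \<kappa>_meas] h])
  qed
  then show ?case by (simp add: kap_Suc[abs_def])
qed

lemma mpt_\<theta>: "k \<in> K \<Longrightarrow> mpt P (\<theta> k)"
  using act by (simp add: mp_action_def)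

lemma \<theta>_meas: "k \<in> K \<Longrightarrow> \<theta> k \<in> measurable P P"
  using mpt_\<theta> by (simp add: mpt_def)

lemma \<theta>_space: "k \<in> K \<Longrightarrow> \<omega> \<in> space P \<Longrightarrow> \<theta> k \<omega> \<in> space P"
  using \<theta>_meas by (meson measurable_space)

lemma \<theta>_comp: "k \<in> K \<Longrightarrow> l \<in> K \<Longrightarrow> \<omega> \<in> space P \<Longrightarrow> \<theta> k (\<theta> l \<omega>) = \<theta> (k + l) \<omega>"
  using act by (simp add: mp_action_def)

lemma S_meas[measurable]: "S \<in> measurable (M \<Otimes>\<^sub>M P) (M \<Otimes>\<^sub>M P)"
  unfolding S_def
proof (rule measurable_Pair)
  show "(\<lambda>x. \<tau> (fst x)) \<in> measurable (M \<Otimes>\<^sub>M P) M" by measurable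
  have "(\<lambda>x. (\<lambda>k x. \<theta> k (snd x)) (\<kappa> (fst x)) x) \<in> measurable (M \<Otimes>\<^sub>M P) P"
  proof (rule measurable_compose_countable'[OF _ _ countable_K])
    fix k assume "k \<in> K"
    then show "(\<lambda>x. \<theta> k (snd x)) \<in> measurable (M \<Otimes>\<^sub>M P) P"
      by (rule measurable_compose[OF measurable_snd \<theta>_meas])
  next
    show "(\<lambda>x. \<kappa> (fst x)) \<in> measurable (M \<Otimes>\<^sub>M P) (count_space K)"
      by (rule measurable_compose[OF measurable_fst \<kappa>_meas])
  qed
  then show "(\<lambda>x. \<theta> (\<kappa> (fst x)) (snd x)) \<in> measurable (M \<Otimes>\<^sub>M P) P" by simp
qed

lemma S_iter:
  assumes "x \<in> space (M \<Otimes>\<^sub>M P)"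
  shows "(S ^^ i) x = ((\<tau> ^^ i) (fst x), \<theta> (kap i (fst x)) (snd x))"
proof (induction i)
  case 0
  have "snd x \<in> space P" using assms by (auto simp: space_pair_measure)
  then show ?case using act by (simp add: kap_def mp_action_def)
next
  case (Suc i)
  have t: "fst x \<in> space M" and w: "snd x \<in> space P" using assms by (auto simp: space_pair_measure)
  have "(S ^^ Suc i) x = S ((S ^^ i) x)" by simp
  also have "\<dots> = (\<tau> ((\<tau> ^^ i) (fst x)), \<theta> (\<kappa> ((\<tau> ^^ i) (fst x))) (\<theta> (kap i (fst x)) (snd x)))"
    by (simp add: Suc S_def)
  also have "\<theta> (\<kappa> ((\<tau> ^^ i) (fst x))) (\<theta> (kap i (fst x)) (snd x)) = \<theta> (kap (Suc i) (fst x)) (snd x)"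
    using t w by (simp add: \<theta>_comp \<kappa>_K \<tau>_iter_space kap_K kap_Suc add.commute)
  finally show ?case by simp
qed

lemma S_mpt: "mpt (M \<Otimes>\<^sub>M P) S"
proof -
  have "M \<Otimes>\<^sub>M P = distr (M \<Otimes>\<^sub>M P) (M \<Otimes>\<^sub>M P) S"
  proof (rule pair_measure_eqI)
    show "sigma_finite_measure M" "sigma_finite_measure P" by unfold_locales
    show "sets (M \<Otimes>\<^sub>M P) = sets (distr (M \<Otimes>\<^sub>M P) (M \<Otimes>\<^sub>M P) S)" by simp
    fix A B assume A: "A \<in> sets M" and B: "B \<in> sets P"
    have AB: "A \<times> B \<in> sets (M \<Otimes>\<^sub>M P)" using A B by simp
    have X: "S -` (A \<times> B) \<inter> space (M \<Otimes>\<^sub>M P) \<in> sets (M \<Otimes>\<^sub>M P)"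
      using AB by measurable
    have "emeasure (distr (M \<Otimes>\<^sub>M P) (M \<Otimes>\<^sub>M P) S) (A \<times> B)
        = emeasure (M \<Otimes>\<^sub>M P) (S -` (A \<times> B) \<inter> space (M \<Otimes>\<^sub>M P))"
      using AB by (simp add: emeasure_distr)
    also have "\<dots> = (\<integral>\<^sup>+t. emeasure P (Pair t -` (S -` (A \<times> B) \<inter> space (M \<Otimes>\<^sub>M P))) \<partial>M)"
      using X by (rule P.emeasure_pair_measure_alt)
    also have "\<dots> = (\<integral>\<^sup>+t. emeasure P B * indicator (\<tau> -` A \<inter> space M) t \<partial>M)"
    proof (rule nn_integral_cong)
      fix t assume t: "t \<in> space M"
      have "Pair t -` (S -` (A \<times> B) \<inter> space (M \<Otimes>\<^sub>M P))
          = (if \<tau> t \<in> A then \<theta> (\<kappa> t) -` B \<inter> space P else {})"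
        using t by (auto simp: S_def space_pair_measure)
      then show "emeasure P (Pair t -` (S -` (A \<times> B) \<inter> space (M \<Otimes>\<^sub>M P))) = emeasure P B * indicator (\<tau> -` A \<inter> space M) t"
        using t B mpt_emeasure[OF mpt_\<theta>[OF \<kappa>_K[OF t]] B] by (simp add: indicator_def)
    qed
    also have "\<dots> = emeasure P B * emeasure M (\<tau> -` A \<inter> space M)"
      using A by (intro nn_integral_cmult_indicator) measurable
    also have "\<dots> = emeasure M A * emeasure P B"
      using mpt_emeasure[OF mpt_\<tau> A] by (simp add: mult.commute)
    finally show "emeasure M A * emeasure P B = emeasure (distr (M \<Otimes>\<^sub>M P) (M \<Otimes>\<^sub>M P) S) (A \<times> B)"
      by simp
  qed
  then show ?thesis using S_meas by (simp add: mpt_def)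
qed

end

lemma birkhoff_L1_real:
  assumes P: "prob_space N" and erg: "ergodic N T" and f: "integrable N f"
  shows "(\<lambda>n. integral\<^sup>L N (\<lambda>x. \<bar>bsum T f n x / real n - integral\<^sup>L N f\<bar>)) \<longlonglongrightarrow> 0"
proof -
  have mpt: "mpt N T" using erg by (simp add: ergodic_def)
  have i: "integrable N (\<lambda>x. \<bar>bsum T f n x / real n - integral\<^sup>L N f\<bar>)" for n
  proof -
    interpret prob_space N by fact
    show ?thesis using bsum_integrable[OF mpt f, of n] by auto
  qed
  have "(\<lambda>n. \<integral>\<^sup>+x. ennreal \<bar>bsum T f n x / real n - integral\<^sup>L N f\<bar> \<partial>N) \<longlonglongrightarrow> 0"
    by (rule birkhoff_L1[OF assms])
  moreover have "(\<integral>\<^sup>+x. ennreal \<bar>bsum T f n x / real n - integral\<^sup>L N f\<bar> \<partial>N)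
      = ennreal (integral\<^sup>L N (\<lambda>x. \<bar>bsum T f n x / real n - integral\<^sup>L N f\<bar>))" for n
    using i by (intro nn_integral_eq_integral) auto
  ultimately have "(\<lambda>n. ennreal (integral\<^sup>L N (\<lambda>x. \<bar>bsum T f n x / real n - integral\<^sup>L N f\<bar>))) \<longlonglongrightarrow> ennreal 0"
    by simp
  then show ?thesis by (subst (asm) tendsto_ennreal_iff) auto
qed

context skew
begin

lemma measurable_kap_fun[measurable]:
  "(\<lambda>t. g (kap i t)) \<in> borel_measurable M"
proof -
  have "(\<lambda>t. (\<lambda>k t. g k) (kap i t) t) \<in> borel_measurable M"
    by (rule measurable_compose_countable'[OF _ kap_meas countable_K]) simp
  then show ?thesis by simp
qed

lemma rect_mixing:
  assumes C: "C \<in> sets M" and C': "C' \<in> sets M" and B: "B \<in> sets P" and B': "B' \<in> sets P"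
  shows "(\<lambda>n. (\<Sum>i<n. measure (M \<Otimes>\<^sub>M P) ((C \<times> B) \<inter> ((S ^^ i) -` (C' \<times> B') \<inter> space (M \<Otimes>\<^sub>M P)))) / real n)
    \<longlonglongrightarrow> measure M C * measure P B * (measure M C' * measure P B')"
proof -
  define m where "m k = measure P (B \<inter> (\<theta> k -` B' \<inter> space P))" for k
  define e where "e k = m k - measure P B * measure P B'" for k
  define h where "h i t = indicator C t * indicator C' ((\<tau> ^^ i) t) * m (kap i t)" for i t
  have [measurable]: "C \<in> sets M" "C' \<in> sets M" using C C' by auto
  have m01: "0 \<le> m k" "m k \<le> 1" for k unfolding m_def by auto
  have e1: "\<bar>e k\<bar> \<le> 1" for k
  proof -
    have "0 \<le> measure P B * measure P B'" "measure P B * measure P B' \<le> 1"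
      by (auto intro: mult_le_one)
    then show ?thesis using m01[of k] unfolding e_def by linarith
  qed
  have hm[measurable]: "h i \<in> borel_measurable M" for i unfolding h_def by measurable
  have h01: "0 \<le> h i t" "h i t \<le> 1" for i t using m01 unfolding h_def by (auto simp: indicator_def)
  have hint: "integrable M (h i)" for i
    by (rule M.integrable_const_bound[where B=1]) (use h01 in auto)
  have meas: "measure (M \<Otimes>\<^sub>M P) ((C \<times> B) \<inter> ((S ^^ i) -` (C' \<times> B') \<inter> space (M \<Otimes>\<^sub>M P))) = integral\<^sup>L M (h i)" for i
  proof -
    let ?X = "(C \<times> B) \<inter> ((S ^^ i) -` (C' \<times> B') \<inter> space (M \<Otimes>\<^sub>M P))"
    have Si[measurable]: "(S ^^ i) \<in> measurable (M \<Otimes>\<^sub>M P) (M \<Otimes>\<^sub>M P)" by (rule funpow_measurable[OF S_meas])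
    have X: "?X \<in> sets (M \<Otimes>\<^sub>M P)" using B B' by measurable
    have "emeasure (M \<Otimes>\<^sub>M P) ?X = (\<integral>\<^sup>+t. emeasure P (Pair t -` ?X) \<partial>M)"
      using X by (rule P.emeasure_pair_measure_alt)
    also have "\<dots> = (\<integral>\<^sup>+t. ennreal (h i t) \<partial>M)"
    proof (rule nn_integral_cong)
      fix t assume t: "t \<in> space M"
      have eq: "Pair t -` ?X = (if t \<in> C \<and> (\<tau> ^^ i) t \<in> C' then B \<inter> (\<theta> (kap i t) -` B' \<inter> space P) else {})"
        using t B[THEN sets.sets_into_space] by (auto simp: S_iter space_pair_measure)
      show "emeasure P (Pair t -` ?X) = ennreal (h i t)"
        unfolding eq by (auto simp: h_def m_def P.emeasure_eq_measure indicator_def)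
    qed
    also have "\<dots> = ennreal (integral\<^sup>L M (h i))"
      using hint h01 by (intro nn_integral_eq_integral) auto
    finally have "ennreal (measure (M \<Otimes>\<^sub>M P) ?X) = ennreal (integral\<^sup>L M (h i))"
      by (simp add: PM.emeasure_eq_measure)
    moreover have "0 \<le> integral\<^sup>L M (h i)" using h01 by (simp add: integral_nonneg)
    ultimately show ?thesis by simp
  qed
  define A where "A n t = bsum \<tau> (indicator C') n t / real n" for n t
  define W where "W n t = 1 / real n * (\<Sum>i<n. \<bar>e (kap i t)\<bar>)" for n t
  define R where "R n t = (\<Sum>i<n. indicator C t * indicator C' ((\<tau> ^^ i) t) * e (kap i t)) / real n" for n t
  have Am[measurable]: "A n \<in> borel_measurable M" for n unfolding A_def by measurable
  have Rm[measurable]: "R n \<in> borel_measurable M" for n unfolding R_def e_def by measurable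
  have Wm[measurable]: "W n \<in> borel_measurable M" for n unfolding W_def e_def by measurable
  have A01: "0 \<le> A n t" "A n t \<le> 1" for n t
  proof -
    have "0 \<le> bsum \<tau> (indicator C') n t" unfolding bsum_def by (intro sum_nonneg) auto
    moreover have "bsum \<tau> (indicator C') n t \<le> (\<Sum>i<n. 1)" unfolding bsum_def
      by (intro sum_mono) (auto simp: indicator_def)
    ultimately have "0 \<le> bsum \<tau> (indicator C') n t" "bsum \<tau> (indicator C') n t \<le> real n" by auto
    then show "0 \<le> A n t" "A n t \<le> 1" unfolding A_def by (auto simp: divide_le_eq)
  qed
  have W01: "0 \<le> W n t" "W n t \<le> 1" for n t
  proof -
    have "(\<Sum>i<n. \<bar>e (kap i t)\<bar>) \<le> real n"
      using sum_bounded_above[of "{..<n}" "\<lambda>i. \<bar>e (kap i t)\<bar>" 1] e1 by auto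
    then show "0 \<le> W n t" "W n t \<le> 1" unfolding W_def by (auto simp: divide_le_eq)
  qed
  have RW: "\<bar>R n t\<bar> \<le> W n t" for n t
  proof -
    have "\<bar>\<Sum>i<n. indicator C t * indicator C' ((\<tau> ^^ i) t) * e (kap i t)\<bar> \<le> (\<Sum>i<n. \<bar>e (kap i t)\<bar>)"
      by (rule order_trans[OF sum_abs sum_mono]) (auto simp: indicator_def abs_mult)
    then show ?thesis unfolding R_def W_def by (simp add: divide_right_mono)
  qed
  have Aint: "integrable M (\<lambda>t. indicator C t * A n t)" for n
    by (rule M.integrable_const_bound[where B=1]) (use A01 in \<open>auto simp: indicator_def\<close>)
  have Rint: "integrable M (R n)" for n
    by (rule M.integrable_const_bound[where B=1]) (use order_trans[OF RW W01(2)] in auto)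
  have decomp: "(\<Sum>i<n. h i t) / real n = measure P B * measure P B' * (indicator C t * A n t) + R n t" for n t
  proof -
    have "h i t = measure P B * measure P B' * (indicator C t * indicator C' ((\<tau> ^^ i) t))
        + indicator C t * indicator C' ((\<tau> ^^ i) t) * e (kap i t)" for i
      unfolding h_def e_def by (simp add: algebra_simps)
    then have "(\<Sum>i<n. h i t) = (\<Sum>i<n. measure P B * measure P B' * (indicator C t * indicator C' ((\<tau> ^^ i) t)))
        + (\<Sum>i<n. indicator C t * indicator C' ((\<tau> ^^ i) t) * e (kap i t))"
      by (simp only: sum.distrib)
    also have "(\<Sum>i<n. measure P B * measure P B' * (indicator C t * indicator C' ((\<tau> ^^ i) t)))
       = measure P B * measure P B' * (indicator C t * bsum \<tau> (indicator C') n t)"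
      by (simp only: bsum_def sum_distrib_left)
    finally show ?thesis unfolding A_def R_def by (simp add: add_divide_distrib)
  qed
  have avg: "(\<Sum>i<n. measure (M \<Otimes>\<^sub>M P) ((C \<times> B) \<inter> ((S ^^ i) -` (C' \<times> B') \<inter> space (M \<Otimes>\<^sub>M P)))) / real n
      = measure P B * measure P B' * integral\<^sup>L M (\<lambda>t. indicator C t * A n t) + integral\<^sup>L M (R n)" for n
  proof -
    have "(\<Sum>i<n. measure (M \<Otimes>\<^sub>M P) ((C \<times> B) \<inter> ((S ^^ i) -` (C' \<times> B') \<inter> space (M \<Otimes>\<^sub>M P)))) / real n
        = integral\<^sup>L M (\<lambda>t. (\<Sum>i<n. h i t) / real n)"
      using hint by (simp add: meas Bochner_Integration.integral_sum)
    also have "\<dots> = integral\<^sup>L M (\<lambda>t. measure P B * measure P B' * (indicator C t * A n t) + R n t)"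
      by (simp add: decomp)
    also have "\<dots> = measure P B * measure P B' * integral\<^sup>L M (\<lambda>t. indicator C t * A n t) + integral\<^sup>L M (R n)"
      using Aint Rint by simp
    finally show ?thesis .
  qed
  have T1: "(\<lambda>n. integral\<^sup>L M (\<lambda>t. indicator C t * A n t)) \<longlonglongrightarrow> measure M C * measure M C'"
  proof -
    have ic: "integrable M (indicator C' :: 'm \<Rightarrow> real)"
      by (rule M.integrable_const_bound[where B=1]) (auto simp: indicator_def)
    have L: "(\<lambda>n. integral\<^sup>L M (\<lambda>x. \<bar>A n x - measure M C'\<bar>)) \<longlonglongrightarrow> 0"
      using birkhoff_L1_real[OF M erg ic] unfolding A_def by simp
    have "(\<lambda>n. integral\<^sup>L M (\<lambda>t. indicator C t * A n t) - measure M C * measure M C') \<longlonglongrightarrow> 0"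
    proof (rule Lim_null_comparison[OF always_eventually L], rule allI)
      fix n
      have iA: "integrable M (\<lambda>x. A n x - measure M C')"
      proof (rule M.integrable_const_bound[where B=2])
        have "\<bar>A n x - measure M C'\<bar> \<le> 2" for x
          using A01[of n x] M.prob_le_1[of C'] measure_nonneg[of M C'] unfolding abs_le_iff by linarith
        then show "AE x in M. norm (A n x - measure M C') \<le> 2" by simp
      qed simp
      have "integral\<^sup>L M (\<lambda>t. indicator C t * A n t) - measure M C * measure M C'
          = integral\<^sup>L M (\<lambda>t. indicator C t * (A n t - measure M C'))"
      proof -
        have iC: "integrable M (indicator C :: 'm \<Rightarrow> real)"
          by (rule M.integrable_const_bound[where B=1]) (auto simp: indicator_def)
        have "integral\<^sup>L M (\<lambda>t. indicator C t * measure M C') = measure M C * measure M C'"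
          using C by (simp add: Int_absorb2 sets.sets_into_space)
        moreover have "integral\<^sup>L M (\<lambda>t. indicator C t * A n t - indicator C t * measure M C')
           = integral\<^sup>L M (\<lambda>t. indicator C t * A n t) - integral\<^sup>L M (\<lambda>t. indicator C t * measure M C')"
          using Aint iC by (intro Bochner_Integration.integral_diff) auto
        ultimately show ?thesis by (simp add: right_diff_distrib)
      qed
      also have "\<bar>\<dots>\<bar> \<le> integral\<^sup>L M (\<lambda>t. \<bar>indicator C t * (A n t - measure M C')\<bar>)"
        by (rule integral_abs_bound)
      also have "\<dots> \<le> integral\<^sup>L M (\<lambda>x. \<bar>A n x - measure M C'\<bar>)"
      proof (rule integral_mono)
        show "integrable M (\<lambda>t. \<bar>indicator C t * (A n t - measure M C')\<bar>)"
          using integrable_abs[OF integrable_real_mult_indicator[OF C iA]] by (simp add: mult.commute)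
      qed (use iA in \<open>auto simp: indicator_def abs_mult\<close>)
      finally show "norm (integral\<^sup>L M (\<lambda>t. indicator C t * A n t) - measure M C * measure M C')
          \<le> integral\<^sup>L M (\<lambda>x. \<bar>A n x - measure M C'\<bar>)" by simp
    qed
    then show ?thesis by (simp add: LIM_zero_iff)
  qed
  have T2: "(\<lambda>n. integral\<^sup>L M (R n)) \<longlonglongrightarrow> 0"
  proof -
    have "(\<lambda>n. integral\<^sup>L M (W n)) \<longlonglongrightarrow> integral\<^sup>L M (\<lambda>t. 0)"
    proof (rule integral_dominated_convergence[where w="\<lambda>t. 1"])
      show "AE t in M. (\<lambda>n. W n t) \<longlonglongrightarrow> 0"
        using wm
      proof eventually_elim
        case (elim t)
        then have "(\<lambda>n. 1 / real n * (\<Sum>i<n. \<bar>measure P (B \<inter> (\<theta> (kap i t) -` B' \<inter> space P)) - measure P B * measure P B'\<bar>)) \<longlonglongrightarrow> 0"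
          using B B' unfolding weakly_mixing_along_def kap_def by blast
        then show ?case unfolding W_def e_def m_def .
      qed
      show "AE t in M. norm (W n t) \<le> 1" for n using W01 by auto
    qed auto
    then have "(\<lambda>n. integral\<^sup>L M (W n)) \<longlonglongrightarrow> 0" by simp
    then show ?thesis
    proof (rule Lim_null_comparison[OF always_eventually, rotated], intro allI)
      fix n
      have iW: "integrable M (W n)"
        by (rule M.integrable_const_bound[where B=1]) (use W01 in auto)
      have "\<bar>integral\<^sup>L M (R n)\<bar> \<le> integral\<^sup>L M (\<lambda>t. \<bar>R n t\<bar>)" by (rule integral_abs_bound)
      also have "\<dots> \<le> integral\<^sup>L M (W n)" using iW Rint RW by (intro integral_mono) auto
      finally show "norm (integral\<^sup>L M (R n)) \<le> integral\<^sup>L M (W n)" by simp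
    qed
  qed
  have "(\<lambda>n. measure P B * measure P B' * integral\<^sup>L M (\<lambda>t. indicator C t * A n t) + integral\<^sup>L M (R n))
      \<longlonglongrightarrow> measure P B * measure P B' * (measure M C * measure M C') + 0"
    by (intro tendsto_intros T1 T2)
  then show ?thesis unfolding avg by (simp add: ac_simps)
qed

end

lemma approx_limit:
  fixes a :: "nat \<Rightarrow> real"
  assumes b: "\<And>N. b N \<longlonglongrightarrow> L' N"
    and ab: "\<And>N n. \<bar>a n - b N n\<bar> \<le> d N"
    and LL: "\<And>N. \<bar>L - L' N\<bar> \<le> d N"
    and d: "d \<longlonglongrightarrow> 0"
  shows "a \<longlonglongrightarrow> L"
proof (rule LIMSEQ_I)
  fix r :: real assume r: "0 < r"
  have "\<forall>\<^sub>F N in sequentially. norm (d N - 0) < r / 3"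
    using d r by (intro tendstoD[of d 0 sequentially "r/3", unfolded dist_norm]) auto
  then obtain N where dN: "\<bar>d N\<bar> < r / 3" by (auto simp: eventually_sequentially)
  obtain n0 where n0: "\<forall>n\<ge>n0. norm (b N n - L' N) < r / 3"
    using LIMSEQ_D[OF b, of "r/3"] r by auto
  show "\<exists>no. \<forall>n\<ge>no. norm (a n - L) < r"
  proof (intro exI allI impI)
    fix n assume "n0 \<le> n"
    then have "\<bar>b N n - L' N\<bar> < r / 3" using n0 by auto
    then show "norm (a n - L) < r" using ab[of n N] LL[of N] dN
      unfolding real_norm_def abs_le_iff abs_less_iff by linarith
  qed
qed

lemma avg_diff_bound:
  fixes a b :: "nat \<Rightarrow> real"
  assumes "\<And>i. \<bar>a i - b i\<bar> \<le> d"
  shows "\<bar>(\<Sum>i<n. a i) / real n - (\<Sum>i<n. b i) / real n\<bar> \<le> d"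
proof (cases "n = 0")
  case True
  have "0 \<le> d" using assms[of 0] by linarith
  then show ?thesis using True by simp
next
  case False
  have "\<bar>\<Sum>i<n. a i - b i\<bar> \<le> (\<Sum>i<n. \<bar>a i - b i\<bar>)" by (rule sum_abs)
  also have "\<dots> \<le> (\<Sum>i<n. d)" by (intro sum_mono assms)
  finally have "\<bar>\<Sum>i<n. a i - b i\<bar> \<le> real n * d" by simp
  then have "\<bar>\<Sum>i<n. a i - b i\<bar> / real n \<le> d" using False by (simp add: divide_le_eq mult.commute)
  then show ?thesis by (simp add: sum_subtractf diff_divide_distrib[symmetric])
qed

context skew
begin

abbreviation "sp \<equiv> space (M \<Otimes>\<^sub>M P)"
abbreviation "mu \<equiv> measure (M \<Otimes>\<^sub>M P)"

lemma Si_meas[measurable]: "(S ^^ i) \<in> measurable (M \<Otimes>\<^sub>M P) (M \<Otimes>\<^sub>M P)"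
  by (rule funpow_measurable[OF S_meas])

lemma Si_space: "x \<in> sp \<Longrightarrow> (S ^^ i) x \<in> sp"
  using Si_meas by (meson measurable_space)

lemma Si_mpt: "mpt (M \<Otimes>\<^sub>M P) (S ^^ i)"
  by (rule mpt_iter[OF S_mpt])

lemma measure_times_MP:
  assumes "C \<in> sets M" "B \<in> sets P"
  shows "mu (C \<times> B) = measure M C * measure P B"
  using P.emeasure_pair_measure_Times[OF assms]
  by (simp add: measure_def enn2real_mult)

definition av :: "('m \<times> 'a) set \<Rightarrow> ('m \<times> 'a) set \<Rightarrow> nat \<Rightarrow> real" where
  "av E A n = (\<Sum>i<n. mu (E \<inter> ((S ^^ i) -` A \<inter> sp))) / real n"

lemma av_rect:
  assumes "C \<in> sets M" "B \<in> sets P" "C' \<in> sets M" "B' \<in> sets P"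
  shows "av (C \<times> B) (C' \<times> B') \<longlonglongrightarrow> mu (C \<times> B) * mu (C' \<times> B')"
  using rect_mixing[OF assms(1,3,2,4)] assms unfolding av_def by (simp add: measure_times_MP)

lemma av_mixing:
  assumes C: "C \<in> sets M" and B: "B \<in> sets P" and A: "A \<in> sets (M \<Otimes>\<^sub>M P)"
  shows "av (C \<times> B) A \<longlonglongrightarrow> mu (C \<times> B) * mu A"
proof -
  define E where "E = C \<times> B"
  have E[measurable]: "E \<in> sets (M \<Otimes>\<^sub>M P)" using C B by (simp add: E_def)
  have Esp: "E \<subseteq> sp" using E sets.sets_into_space by blast
  have "av E {} = (\<lambda>n. 0)" by (auto simp: av_def)
  then have Qempty: "av E {} \<longlonglongrightarrow> mu E * mu {}" by simp
  have fin_union: "av E (X \<union> Y) \<longlonglongrightarrow> mu E * mu (X \<union> Y)"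
    if X: "X \<in> sets (M \<Otimes>\<^sub>M P)" and Y: "Y \<in> sets (M \<Otimes>\<^sub>M P)" and XY: "X \<inter> Y = {}"
      and QX: "av E X \<longlonglongrightarrow> mu E * mu X" and QY: "av E Y \<longlonglongrightarrow> mu E * mu Y" for X Y
  proof -
    have [measurable]: "X \<in> sets (M \<Otimes>\<^sub>M P)" "Y \<in> sets (M \<Otimes>\<^sub>M P)" using X Y by auto
    have "mu (E \<inter> ((S ^^ i) -` (X \<union> Y) \<inter> sp)) = mu (E \<inter> ((S ^^ i) -` X \<inter> sp)) + mu (E \<inter> ((S ^^ i) -` Y \<inter> sp))" for i
    proof -
      have "E \<inter> ((S ^^ i) -` (X \<union> Y) \<inter> sp) = (E \<inter> ((S ^^ i) -` X \<inter> sp)) \<union> (E \<inter> ((S ^^ i) -` Y \<inter> sp))" by auto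
      moreover have "(E \<inter> ((S ^^ i) -` X \<inter> sp)) \<inter> (E \<inter> ((S ^^ i) -` Y \<inter> sp)) = {}" using XY by auto
      ultimately show ?thesis by (simp add: PM.finite_measure_Union)
    qed
    then have "av E (X \<union> Y) n = av E X n + av E Y n" for n
      unfolding av_def by (simp add: sum.distrib add_divide_distrib)
    then have "av E (X \<union> Y) = (\<lambda>n. av E X n + av E Y n)" by (intro ext)
    moreover have "mu (X \<union> Y) = mu X + mu Y" using XY by (simp add: PM.finite_measure_Union)
    ultimately show ?thesis using tendsto_add[OF QX QY] by (simp add: distrib_left)
  qed
  have memb: "A \<in> sigma_sets (space M \<times> space P) {a \<times> b | a b. a \<in> sets M \<and> b \<in> sets P}"
    using A by (simp add: sets_pair_measure)
  have "av E A \<longlonglongrightarrow> mu E * mu A"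
    using Int_stable_pair_measure_generator[of M P] pair_measure_closed[of M P] memb
  proof (induction rule: sigma_sets_induct_disjoint)
    case (basic A)
    then obtain C' B' where "A = C' \<times> B'" "C' \<in> sets M" "B' \<in> sets P" by auto
    then show ?case unfolding E_def using av_rect[OF C B] by simp
  next
    case empty show ?case by (rule Qempty)
  next
    case (compl A)
    have A[measurable]: "A \<in> sets (M \<Otimes>\<^sub>M P)" using compl(1) by (simp add: sets_pair_measure)
    have spMP: "sp = space M \<times> space P" by (simp add: space_pair_measure)
    have "mu (E \<inter> ((S ^^ i) -` (sp - A) \<inter> sp)) = mu E - mu (E \<inter> ((S ^^ i) -` A \<inter> sp))" for i
    proof -
      have "E \<inter> ((S ^^ i) -` (sp - A) \<inter> sp) = E - (E \<inter> ((S ^^ i) -` A \<inter> sp))"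
        using Esp Si_space by auto
      then show ?thesis by (simp add: PM.finite_measure_Diff)
    qed
    then have eq: "av E (sp - A) n = mu E - av E A n" if "n \<noteq> 0" for n
      using that unfolding av_def by (simp add: sum_subtractf diff_divide_distrib)
    have "(\<lambda>n. mu E - av E A n) \<longlonglongrightarrow> mu E - mu E * mu A"
      using compl(2) unfolding spMP[symmetric] by (intro tendsto_intros)
    moreover have "mu E - mu E * mu A = mu E * mu (sp - A)"
      using PM.prob_compl[OF A] by (simp add: right_diff_distrib)
    ultimately have "(\<lambda>n. mu E - av E A n) \<longlonglongrightarrow> mu E * mu (sp - A)" by simp
    moreover have ev: "eventually (\<lambda>n. av E (sp - A) n = mu E - av E A n) sequentially"
      by (rule eventually_sequentiallyI[of 1]) (use eq in auto)
    ultimately have "av E (sp - A) \<longlonglongrightarrow> mu E * mu (sp - A)"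
      by (subst tendsto_cong[OF ev])
    then show ?case unfolding spMP .
  next
    case (union A)
    have Am[measurable]: "A j \<in> sets (M \<Otimes>\<^sub>M P)" for j using union(2) by (auto simp: sets_pair_measure)
    define U where "U N = (\<Union>j<N. A j)" for N
    have Um[measurable]: "U N \<in> sets (M \<Otimes>\<^sub>M P)" for N unfolding U_def by measurable
    have Uall[measurable]: "(\<Union>j. A j) \<in> sets (M \<Otimes>\<^sub>M P)" by measurable
    have QU: "av E (U N) \<longlonglongrightarrow> mu E * mu (U N)" for N
    proof (induction N)
      case 0 then show ?case using Qempty by (simp add: U_def)
    next
      case (Suc N)
      have "U (Suc N) = U N \<union> A N" by (auto simp: U_def lessThan_Suc)
      moreover have "U N \<inter> A N = {}"
      proof -
        have "A j \<inter> A N = {}" if "j < N" for j using union(1) that unfolding disjoint_family_on_def by auto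
        then show ?thesis unfolding U_def by auto
      qed
      ultimately show ?case using fin_union[OF Um Am _ Suc union(3)] by simp
    qed
    have UU: "U N \<subseteq> (\<Union>j. A j)" for N by (auto simp: U_def)
    define d where "d N = mu ((\<Union>j. A j) - U N)" for N
    have dd: "d N = mu (\<Union>j. A j) - mu (U N)" for N
      unfolding d_def using UU by (simp add: PM.finite_measure_Diff)
    show ?case
    proof (rule approx_limit[OF QU])
      fix N n
      have tm: "\<bar>mu (E \<inter> ((S ^^ i) -` (\<Union>j. A j) \<inter> sp)) - mu (E \<inter> ((S ^^ i) -` U N \<inter> sp))\<bar> \<le> d N" for i
      proof -
        have spl: "E \<inter> ((S ^^ i) -` (\<Union>j. A j) \<inter> sp)
            = (E \<inter> ((S ^^ i) -` U N \<inter> sp)) \<union> (E \<inter> ((S ^^ i) -` ((\<Union>j. A j) - U N) \<inter> sp))"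
          using UU[of N] by blast
        have "mu (E \<inter> ((S ^^ i) -` (\<Union>j. A j) \<inter> sp))
            = mu (E \<inter> ((S ^^ i) -` U N \<inter> sp)) + mu (E \<inter> ((S ^^ i) -` ((\<Union>j. A j) - U N) \<inter> sp))"
          unfolding spl by (rule PM.finite_measure_Union) auto
        moreover have "mu (E \<inter> ((S ^^ i) -` ((\<Union>j. A j) - U N) \<inter> sp)) \<le> mu ((S ^^ i) -` ((\<Union>j. A j) - U N) \<inter> sp)"
          by (intro PM.finite_measure_mono) auto
        moreover have "mu ((S ^^ i) -` ((\<Union>j. A j) - U N) \<inter> sp) = d N"
          unfolding d_def by (rule mpt_measure[OF Si_mpt]) measurable
        ultimately show ?thesis by simp
      qed
      show "\<bar>av E (\<Union>j. A j) n - av E (U N) n\<bar> \<le> d N"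
        unfolding av_def by (rule avg_diff_bound) (rule tm)
    next
      fix N
      have "0 \<le> mu E" "mu E \<le> 1" by auto
      moreover have "0 \<le> d N" unfolding d_def by simp
      ultimately have "mu E * d N \<le> d N" by (simp add: mult_left_le_one_le)
      moreover have "mu E * mu (\<Union>j. A j) - mu E * mu (U N) = mu E * d N" by (simp add: dd right_diff_distrib)
      moreover have "0 \<le> mu E * d N" using \<open>0 \<le> mu E\<close> \<open>0 \<le> d N\<close> by simp
      ultimately show "\<bar>mu E * mu (\<Union>j. A j) - mu E * mu (U N)\<bar> \<le> d N" by simp
    next
      have "(\<lambda>N. mu (U N)) \<longlonglongrightarrow> mu (\<Union>N. U N)"
      proof (rule PM.finite_Lim_measure_incseq)
        show "incseq U" unfolding incseq_def U_def by (intro allI impI UN_mono) auto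
      qed auto
      moreover have "(\<Union>N. U N) = (\<Union>j. A j)" by (auto simp: U_def)
      ultimately have "(\<lambda>N. mu (\<Union>j. A j) - mu (U N)) \<longlonglongrightarrow> mu (\<Union>j. A j) - mu (\<Union>j. A j)"
        by (intro tendsto_intros) simp
      moreover have "d = (\<lambda>N. mu (\<Union>j. A j) - mu (U N))" by (rule ext) (rule dd)
      ultimately show "d \<longlonglongrightarrow> 0" by simp
    qed
  qed
  then show ?thesis by (simp add: E_def)
qed

lemma S_inv_iter:
  assumes inv: "S -` A \<inter> sp = A"
  shows "(S ^^ i) -` A \<inter> sp = A"
proof (induction i)
  case 0 show ?case using inv by auto
next
  case (Suc i)
  show ?case
  proof (intro set_eqI iffI)
    fix x assume "x \<in> (S ^^ Suc i) -` A \<inter> sp"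
    then have x: "x \<in> sp" and "S ((S ^^ i) x) \<in> A" by auto
    then have "(S ^^ i) x \<in> S -` A \<inter> sp" using Si_space by auto
    then have "(S ^^ i) x \<in> A" using inv by simp
    then show "x \<in> A" using Suc x by auto
  next
    fix x assume xA: "x \<in> A"
    then have x: "x \<in> sp" using inv by auto
    then have "(S ^^ i) x \<in> A" using Suc xA by auto
    then have "(S ^^ i) x \<in> S -` A \<inter> sp" using inv by simp
    then show "x \<in> (S ^^ Suc i) -` A \<inter> sp" using x by auto
  qed
qed

lemma S_ergodic: "ergodic (M \<Otimes>\<^sub>M P) S"
  unfolding ergodic_def
proof (intro conjI S_mpt ballI impI)
  fix A assume A[measurable]: "A \<in> sets (M \<Otimes>\<^sub>M P)" and inv: "S -` A \<inter> sp = A"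
  have Asp: "A \<subseteq> sp" using A sets.sets_into_space by blast
  have indep: "mu (A \<inter> E) = mu A * mu E"
    if "E \<in> sigma_sets (space M \<times> space P) {a \<times> b | a b. a \<in> sets M \<and> b \<in> sets P}" for E
    using Int_stable_pair_measure_generator pair_measure_closed that
  proof (induction rule: sigma_sets_induct_disjoint)
    case (basic E)
    then obtain C B where CB: "E = C \<times> B" "C \<in> sets M" "B \<in> sets P" by auto
    have l1: "av E A \<longlonglongrightarrow> mu E * mu A" using av_mixing[OF CB(2,3) A] CB(1) by simp
    have eq: "av E A n = mu (A \<inter> E)" if "n \<noteq> 0" for n
      using that unfolding av_def S_inv_iter[OF inv] by (simp add: Int_commute)
    have ev: "eventually (\<lambda>n. av E A n = mu (A \<inter> E)) sequentially"
      by (rule eventually_sequentiallyI[of 1]) (use eq in auto)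
    have l2: "av E A \<longlonglongrightarrow> mu (A \<inter> E)"
      by (subst tendsto_cong[OF ev]) (rule tendsto_const)
    have "mu E * mu A = mu (A \<inter> E)" by (rule LIMSEQ_unique[OF l1 l2])
    then show ?case by (simp add: mult.commute)
  next
    case empty show ?case by simp
  next
    case (compl E)
    have E[measurable]: "E \<in> sets (M \<Otimes>\<^sub>M P)" using compl(1) by (simp add: sets_pair_measure)
    have spMP: "sp = space M \<times> space P" by (simp add: space_pair_measure)
    have "A \<inter> (sp - E) = A - (A \<inter> E)" using Asp by auto
    then have "mu (A \<inter> (sp - E)) = mu A - mu (A \<inter> E)" by (simp add: PM.finite_measure_Diff)
    also have "\<dots> = mu A * (1 - mu E)" using compl(2) by (simp add: right_diff_distrib)
    also have "\<dots> = mu A * mu (sp - E)" using PM.prob_compl[OF E] by simp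
    finally show ?case unfolding spMP .
  next
    case (union E)
    have Em[measurable]: "E j \<in> sets (M \<Otimes>\<^sub>M P)" for j using union(2) by (auto simp: sets_pair_measure)
    have "(\<lambda>j. mu (A \<inter> E j)) sums mu (\<Union>j. A \<inter> E j)"
      using union(1) by (intro PM.finite_measure_UNION) (auto simp: disjoint_family_on_def)
    moreover have "(\<lambda>j. mu A * mu (E j)) sums (mu A * mu (\<Union>j. E j))"
      using union(1) by (intro sums_mult PM.finite_measure_UNION) auto
    moreover have "(\<lambda>j. mu (A \<inter> E j)) = (\<lambda>j. mu A * mu (E j))" using union(3) by (intro ext)
    moreover have "(\<Union>j. A \<inter> E j) = A \<inter> (\<Union>j. E j)" by auto
    ultimately show ?case using sums_unique2 by metis
  qed
  have "mu (A \<inter> A) = mu A * mu A" by (rule indep) (use A in \<open>simp add: sets_pair_measure\<close>)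
  then have "mu A * (1 - mu A) = 0" by (simp add: algebra_simps)
  then show "mu A = 0 \<or> mu A = 1" by simp
qed

end

theorem corollary3p1:
  fixes P :: "'a measure" and M :: "'m measure"
    and K :: "(int ^ 'd) set"
    and \<theta> :: "int ^ 'd \<Rightarrow> 'a \<Rightarrow> 'a"
    and \<tau> :: "'m \<Rightarrow> 'm" and \<kappa> :: "'m \<Rightarrow> int ^ 'd"
    and F :: "'m \<times> 'a \<Rightarrow> real"
  assumes K: "K = nonneg_lattice \<or> K = UNIV"
    and P: "prob_space P" and M: "prob_space M"
    and act: "mp_action P K \<theta>"
    and erg: "ergodic M \<tau>"
    and \<kappa>_meas: "\<kappa> \<in> measurable M (count_space K)"
    and wm: "AE t in M. weakly_mixing_along P \<theta> (\<lambda>n. \<Sum>i<n. \<kappa> ((\<tau> ^^ i) t))"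
    and F: "integrable (M \<Otimes>\<^sub>M P) F"
  shows "(AE x in M \<Otimes>\<^sub>M P.
           (\<lambda>n. (1 / real n) * (\<Sum>i<n. F ((\<tau> ^^ i) (fst x),
                   \<theta> (\<Sum>j<i. \<kappa> ((\<tau> ^^ j) (fst x))) (snd x))))
           \<longlonglongrightarrow> integral\<^sup>L (M \<Otimes>\<^sub>M P) F) \<and>
         (\<lambda>n. \<integral>\<^sup>+ x. ennreal \<bar>(1 / real n) * (\<Sum>i<n. F ((\<tau> ^^ i) (fst x),
                   \<theta> (\<Sum>j<i. \<kappa> ((\<tau> ^^ j) (fst x))) (snd x))) - integral\<^sup>L (M \<Otimes>\<^sub>M P) F\<bar>
                 \<partial>(M \<Otimes>\<^sub>M P)) \<longlonglongrightarrow> 0"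
proof -
  interpret skew P M K \<theta> \<tau> \<kappa>
    by (rule skew.intro[OF K P M act erg \<kappa>_meas wm])
  have PMprob: "prob_space (M \<Otimes>\<^sub>M P)" by (rule PM.prob_space_axioms)
  have eqx: "bsum S F n x / real n = (1 / real n) * (\<Sum>i<n. F ((\<tau> ^^ i) (fst x),
                   \<theta> (\<Sum>j<i. \<kappa> ((\<tau> ^^ j) (fst x))) (snd x)))"
    if "x \<in> space (M \<Otimes>\<^sub>M P)" for n x
    using that by (simp add: bsum_def S_iter kap_def)
  have ae: "AE x in M \<Otimes>\<^sub>M P. (\<lambda>n. bsum S F n x / real n) \<longlonglongrightarrow> integral\<^sup>L (M \<Otimes>\<^sub>M P) F"
    by (rule birkhoff_ae[OF PMprob S_ergodic F])
  have L1: "(\<lambda>n. \<integral>\<^sup>+x. ennreal \<bar>bsum S F n x / real n - integral\<^sup>L (M \<Otimes>\<^sub>M P) F\<bar> \<partial>(M \<Otimes>\<^sub>M P)) \<longlonglongrightarrow> 0"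
    by (rule birkhoff_L1[OF PMprob S_ergodic F])
  show ?thesis
  proof
    show "AE x in M \<Otimes>\<^sub>M P.
           (\<lambda>n. (1 / real n) * (\<Sum>i<n. F ((\<tau> ^^ i) (fst x),
                   \<theta> (\<Sum>j<i. \<kappa> ((\<tau> ^^ j) (fst x))) (snd x))))
           \<longlonglongrightarrow> integral\<^sup>L (M \<Otimes>\<^sub>M P) F"
      using ae AE_space
    proof eventually_elim
      case (elim x)
      then show ?case using eqx[OF elim(2)] by simp
    qed
    have "(\<integral>\<^sup>+x. ennreal \<bar>bsum S F n x / real n - integral\<^sup>L (M \<Otimes>\<^sub>M P) F\<bar> \<partial>(M \<Otimes>\<^sub>M P))
      = (\<integral>\<^sup>+ x. ennreal \<bar>(1 / real n) * (\<Sum>i<n. F ((\<tau> ^^ i) (fst x),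
                   \<theta> (\<Sum>j<i. \<kappa> ((\<tau> ^^ j) (fst x))) (snd x))) - integral\<^sup>L (M \<Otimes>\<^sub>M P) F\<bar>
                 \<partial>(M \<Otimes>\<^sub>M P))" for n
      by (intro nn_integral_cong) (simp add: eqx)
    then show "(\<lambda>n. \<integral>\<^sup>+ x. ennreal \<bar>(1 / real n) * (\<Sum>i<n. F ((\<tau> ^^ i) (fst x),
                   \<theta> (\<Sum>j<i. \<kappa> ((\<tau> ^^ j) (fst x))) (snd x))) - integral\<^sup>L (M \<Otimes>\<^sub>M P) F\<bar>
                 \<partial>(M \<Otimes>\<^sub>M P)) \<longlonglongrightarrow> 0"
      using L1 by simp
  qed
qed

end
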